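(* Fix real $a$, $b>0$, $c>0$ and a prior $F$ with support $[\alpha,\beta]\subset(0,c)$ and positive variance. Let $x^u(\theta)=k\theta+d$ be the unique symmetric Bayesian Nash equilibrium of the affine relaxation (for $a=0$, $x^u(\theta)=(c-\theta)/(2b)$), and assume it is fully active, i.e. $x^u(\beta)\ge0$. Let $\underline x=x^u(\beta)$, $\overline x=x^u(\alpha)$. If $$\overline x\le\frac1\alpha,\qquad a\le b\alpha,\qquad c\alpha^2-2b\alpha+a\ge0,\qquad \min_{y\in[\underline x,\overline x]}\Bigl(\tfrac12-cy+by^2\Bigr)\ge0,$$ then $x^u$ is a symmetric Bayesian Nash equilibrium of the truncated Bayesian contest.
   Context: Let $P(x,y)=\tfrac12+(x-y)\bigl(c-b(x+y)+axy\bigr)$ and $\bar P=\min\{1,\max\{0,P\}\}$. Types are i.i.d. from $F$. In the affine relaxation, actions are real numbers and a type-$\theta$ player choosing $\tilde x$ against opponent strategy $x(\cdot)$ receives $\int[P(\tilde x,x(\theta'))-\theta\tilde x]\,dF(\theta')$. In the truncated Bayesian contest, actions are efforts in $[0,\infty)$ and the payoff is $\int[\bar P(\tilde x,x(\theta'))-\theta\tilde x]\,dF(\theta')$. *)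

theory Defs
  imports "HOL-Probability.Probability"
begin

definition contestP :: "real \<Rightarrow> real \<Rightarrow> real \<Rightarrow> real \<Rightarrow> real \<Rightarrow> real" where
  "contestP a b c x y = 1/2 + (x - y) * (c - b * (x + y) + a * x * y)"

definition contestPbar :: "real \<Rightarrow> real \<Rightarrow> real \<Rightarrow> real \<Rightarrow> real \<Rightarrow> real" where
  "contestPbar a b c x y = min 1 (max 0 (contestP a b c x y))"

definition measure_support :: "real measure \<Rightarrow> real set" where
  "measure_support M = {t. \<forall>e>0. 0 < measure M {t - e <..< t + e}}"

definition relax_payoff ::
  "real \<Rightarrow> real \<Rightarrow> real \<Rightarrow> real measure \<Rightarrow> (real \<Rightarrow> real) \<Rightarrow> real \<Rightarrow> real \<Rightarrow> real" where
  "relax_payoff a b c M s \<theta> xt = (\<integral>\<theta>'. contestP a b c xt (s \<theta>') - \<theta> * xt \<partial>M)"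

definition trunc_payoff ::
  "real \<Rightarrow> real \<Rightarrow> real \<Rightarrow> real measure \<Rightarrow> (real \<Rightarrow> real) \<Rightarrow> real \<Rightarrow> real \<Rightarrow> real" where
  "trunc_payoff a b c M s \<theta> xt = (\<integral>\<theta>'. contestPbar a b c xt (s \<theta>') - \<theta> * xt \<partial>M)"

definition sym_BNE_relax ::
  "real \<Rightarrow> real \<Rightarrow> real \<Rightarrow> real measure \<Rightarrow> (real \<Rightarrow> real) \<Rightarrow> bool" where
  "sym_BNE_relax a b c M s \<longleftrightarrow>
     (\<forall>\<theta>\<in>measure_support M. \<forall>xt::real.
        relax_payoff a b c M s \<theta> xt \<le> relax_payoff a b c M s \<theta> (s \<theta>))"

definition sym_BNE_trunc ::
  "real \<Rightarrow> real \<Rightarrow> real \<Rightarrow> real measure \<Rightarrow> (real \<Rightarrow> real) \<Rightarrow> bool" where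
  "sym_BNE_trunc a b c M s \<longleftrightarrow>
     (\<forall>\<theta>\<in>measure_support M. 0 \<le> s \<theta>) \<and>
     (\<forall>\<theta>\<in>measure_support M. \<forall>xt::real. 0 \<le> xt \<longrightarrow>
        trunc_payoff a b c M s \<theta> xt \<le> trunc_payoff a b c M s \<theta> (s \<theta>))"

end

theory Submission
  imports Defs
begin

lemma ae_support:
  assumes prob: "prob_space M" and borel: "sets M = sets borel"
    and supp: "measure_support M = {\<alpha>..\<beta>}"
  shows "AE t in M. t \<in> {\<alpha>..\<beta>}"
proof -
  interpret prob_space M by fact
  define F where "F = {{t - e <..< t + e} | t e. e > 0 \<and> measure M {t - e <..< t + e} = 0}"
  have "\<And>S. S \<in> F \<Longrightarrow> open S" unfolding F_def by auto
  then obtain F' where F': "F' \<subseteq> F" "countable F'" "\<Union>F' = \<Union>F" by (rule Lindelof)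
  have null: "\<Union>F' \<in> null_sets M"
  proof -
    have "\<Union>(id ` F') \<in> null_sets M"
    proof (rule null_sets_UN')
      show "countable F'" by fact
      fix S assume "S \<in> F'"
      then have "S \<in> F" using F' by auto
      then obtain t e where S: "S = {t - e <..< t + e}" "measure M S = 0" unfolding F_def by auto
      have "S \<in> sets M" using S borel by simp
      then show "id S \<in> null_sets M" using S emeasure_eq_measure[of S] by auto
    qed
    then show ?thesis by simp
  qed
  show ?thesis
  proof (rule AE_I'[OF null])
    show "{x \<in> space M. x \<notin> {\<alpha>..\<beta>}} \<subseteq> \<Union>F'"
    proof
      fix x assume "x \<in> {x \<in> space M. x \<notin> {\<alpha>..\<beta>}}"
      then have "x \<notin> measure_support M" using supp by auto
      then obtain e where e: "e > 0" "\<not> 0 < measure M {x - e <..< x + e}"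
        unfolding measure_support_def by auto
      then have "measure M {x - e <..< x + e} = 0" using measure_nonneg[of M "{x - e <..< x + e}"] by linarith
      then have "{x - e <..< x + e} \<in> F" using e unfolding F_def by blast
      moreover have "x \<in> {x - e <..< x + e}" using e by auto
      ultimately show "x \<in> \<Union>F'" using F' by blast
    qed
  qed
qed

lemma integ_cont:
  fixes f :: "real \<Rightarrow> real"
  assumes prob: "prob_space M" and borel: "sets M = sets borel"
    and ae: "AE t in M. t \<in> {\<alpha>..\<beta>}" and cont: "continuous_on UNIV f"
  shows "integrable M f"
proof -
  interpret prob_space M by fact
  have "compact (f ` {\<alpha>..\<beta>})"
    by (rule compact_continuous_image) (use cont continuous_on_subset in auto)
  then have "bounded (f ` {\<alpha>..\<beta>})" by (rule compact_imp_bounded)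
  then obtain B where B: "\<And>t. t \<in> {\<alpha>..\<beta>} \<Longrightarrow> norm (f t) \<le> B"
    unfolding bounded_iff by blast
  have meas: "f \<in> borel_measurable M"
    using borel_measurable_continuous_onI[OF cont] measurable_cong_sets[OF borel refl] by auto
  show ?thesis
    by (rule integrable_const_bound[where B=B]) (use ae B meas in auto)
qed

lemma P_antisym: "contestP a b c x y = 1 - contestP a b c y x"
  unfolding contestP_def by (simp add: algebra_simps)

lemma P_nonneg:
  fixes a b c \<alpha> x y :: real
  assumes b: "b > 0" and al: "\<alpha> > 0" and c2: "a \<le> b * \<alpha>"
    and c3: "c * \<alpha>^2 - 2 * b * \<alpha> + a \<ge> 0"
    and y0: "0 \<le> y" and y1: "y \<le> 1/\<alpha>" and c4: "1/2 - c * y + b * y^2 \<ge> 0"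
    and x0: "0 \<le> x" and x1: "x \<le> 1/\<alpha>"
  shows "contestP a b c x y \<ge> 0"
proof -
  define h where "h = 1/\<alpha>"
  have h: "h > 0" "\<alpha> * h = 1" using al unfolding h_def by auto
  have ah: "a * h \<le> b"
  proof -
    have "a * h \<le> b * \<alpha> * h" using c2 h by (simp add: mult_right_mono)
    then show ?thesis using h by (simp add: mult.assoc)
  qed
  have A: "a * y - b \<le> 0"
  proof (cases "a \<ge> 0")
    case True
    then have "a * y \<le> a * h" using y1 h_def by (metis mult_left_mono)
    then show ?thesis using ah by linarith
  next
    case False
    then have "a * y \<le> 0" using y0 by (simp add: mult_nonpos_nonneg)
    then show ?thesis using b by linarith
  qed
  have P0: "contestP a b c 0 y \<ge> 0" using c4 unfolding contestP_def by (simp add: algebra_simps power2_eq_square)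
  have f2: "c - b * h - b * y + a * h * y \<ge> 0"
  proof -
    have "(h - y) * (b - a * h) \<ge> 0" using y1 h_def ah by (intro mult_nonneg_nonneg) auto
    then have "c - b * h - b * y + a * h * y \<ge> c - b*h + h*(a*h - b)"
      by (simp add: algebra_simps)
    moreover have "c - b*h + h*(a*h - b) = c * h^2 * 0 + (c - 2*b*h + a*h^2)" by (simp add: algebra_simps power2_eq_square)
    moreover have "c - 2*b*h + a*h^2 \<ge> 0"
    proof -
      have "c = c * (\<alpha>*h)^2" using h by simp
      have "(c - 2*b*h + a*h^2) * \<alpha>^2 = c * \<alpha>^2 - 2*b*\<alpha>*(\<alpha>*h) + a*(\<alpha>*h)^2"
        by (simp add: algebra_simps power2_eq_square)
      also have "\<dots> = c * \<alpha>^2 - 2*b*\<alpha> + a" using h by simp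
      finally have "(c - 2*b*h + a*h^2) * \<alpha>^2 \<ge> 0" using c3 by simp
      then show ?thesis using al by (simp add: zero_le_mult_iff)
    qed
    ultimately show ?thesis by linarith
  qed
  have Ph: "contestP a b c h y \<ge> 0"
  proof -
    have "(h - y) * (c - b * (h + y) + a * h * y) \<ge> 0"
    proof (rule mult_nonneg_nonneg)
      show "0 \<le> h - y" using y1 h_def by simp
      show "0 \<le> c - b * (h + y) + a * h * y" using f2 by (simp add: algebra_simps)
    qed
    then show ?thesis unfolding contestP_def by simp
  qed
  have key: "h * contestP a b c x y - (h - x) * contestP a b c 0 y - x * contestP a b c h y
      = (a * y - b) * h * x * (x - h)"
    unfolding contestP_def by (simp add: field_simps power2_eq_square)
  have "(a * y - b) * h * x * (x - h) \<ge> 0"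
  proof -
    have "(a * y - b) * (x - h) \<ge> 0" using A x1 h_def by (simp add: mult_nonpos_nonpos)
    then have "((a * y - b) * (x - h)) * (h * x) \<ge> 0" using h x0 by simp
    then show ?thesis by (simp add: algebra_simps)
  qed
  moreover have "(h - x) * contestP a b c 0 y \<ge> 0" using x1 h_def P0 by simp
  moreover have "x * contestP a b c h y \<ge> 0" using x0 Ph by simp
  ultimately have "h * contestP a b c x y \<ge> 0" using key by linarith
  then show ?thesis using h by (simp add: zero_le_mult_iff)
qed


theorem proposition10:
  fixes a b c \<alpha> \<beta> k d :: real and M :: "real measure"
  assumes b_pos: "b > 0" and c_pos: "c > 0"
    and prob: "prob_space M" and borel: "sets M = sets borel"
    and supp: "measure_support M = {\<alpha>..\<beta>}"
    and range: "0 < \<alpha>" "\<alpha> \<le> \<beta>" "\<beta> < c"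
    and var_pos: "prob_space.variance M (\<lambda>t. t) > 0"
    and eq_relax: "sym_BNE_relax a b c M (\<lambda>\<theta>. k * \<theta> + d)"
    and active: "k * \<beta> + d \<ge> 0"
    and c1: "k * \<alpha> + d \<le> 1 / \<alpha>"
    and c2: "a \<le> b * \<alpha>"
    and c3: "c * \<alpha>^2 - 2 * b * \<alpha> + a \<ge> 0"
    and c4: "\<forall>y\<in>{k * \<beta> + d .. k * \<alpha> + d}. 1/2 - c * y + b * y^2 \<ge> 0"
  shows "sym_BNE_trunc a b c M (\<lambda>\<theta>. k * \<theta> + d)"
proof -
  interpret prob_space M by fact
  have ae: "AE t in M. t \<in> {\<alpha>..\<beta>}" by (rule ae_support[OF prob borel supp])
  define W where "W x = (\<integral>t. contestP a b c x (k * t + d) \<partial>M)" for x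
  define Wb where "Wb x = (\<integral>t. contestPbar a b c x (k * t + d) \<partial>M)" for x
  have intP: "integrable M (\<lambda>t. contestP a b c x (k * t + d))" for x
    by (rule integ_cont[OF prob borel ae]) (unfold contestP_def, intro continuous_intros)
  have intPb: "integrable M (\<lambda>t. contestPbar a b c x (k * t + d))" for x
    by (rule integ_cont[OF prob borel ae]) (unfold contestPbar_def contestP_def, intro continuous_intros)
  have R: "relax_payoff a b c M (\<lambda>\<theta>. k * \<theta> + d) \<theta> x = W x - \<theta> * x" for \<theta> x
    unfolding relax_payoff_def W_def using intP[of x] by (simp add: prob_space)
  have T: "trunc_payoff a b c M (\<lambda>\<theta>. k * \<theta> + d) \<theta> x = Wb x - \<theta> * x" for \<theta> x
    unfolding trunc_payoff_def Wb_def using intPb[of x] by (simp add: prob_space)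
  have opt: "W x - \<theta> * x \<le> W (k * \<theta> + d) - \<theta> * (k * \<theta> + d)" if "\<theta> \<in> {\<alpha>..\<beta>}" for \<theta> x
    using eq_relax that supp unfolding sym_BNE_relax_def R by auto
  have "k * (\<beta> - \<alpha>)^2 \<le> 0"
  proof -
    have 1: "W (k * \<beta> + d) - \<alpha> * (k * \<beta> + d) \<le> W (k * \<alpha> + d) - \<alpha> * (k * \<alpha> + d)"
      using opt[of \<alpha>] range by auto
    have 2: "W (k * \<alpha> + d) - \<beta> * (k * \<alpha> + d) \<le> W (k * \<beta> + d) - \<beta> * (k * \<beta> + d)"
      using opt[of \<beta>] range by auto
    have "k * (\<beta> - \<alpha>)^2 = \<alpha> * (k * \<alpha> + d) + \<beta> * (k * \<beta> + d) - \<alpha> * (k * \<beta> + d) - \<beta> * (k * \<alpha> + d)"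
      by (simp add: algebra_simps power2_eq_square)
    then show ?thesis using 1 2 by linarith
  qed
  then have kcase: "\<beta> = \<alpha> \<or> k \<le> 0"
    using range by (cases "\<beta> = \<alpha>") (auto simp: mult_le_0_iff)
  have rng: "k * \<beta> + d \<le> k * \<theta> + d \<and> k * \<theta> + d \<le> k * \<alpha> + d" if "\<theta> \<in> {\<alpha>..\<beta>}" for \<theta>
    using kcase that by (auto intro: mult_left_mono_neg)
  have Pnn: "contestP a b c x (k * t + d) \<ge> 0" if "t \<in> {\<alpha>..\<beta>}" "0 \<le> x" "x \<le> 1/\<alpha>" for t x
  proof (rule P_nonneg[OF b_pos range(1) c2 c3])
    show "0 \<le> k * t + d" using rng[OF that(1)] active by linarith
    show "k * t + d \<le> 1 / \<alpha>" using rng[OF that(1)] c1 by linarith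
    show "1/2 - c * (k * t + d) + b * (k * t + d)^2 \<ge> 0" using c4 rng[OF that(1)] by auto
  qed (use that in auto)
  have Pin: "0 \<le> contestP a b c (k * \<theta> + d) (k * t + d) \<and> contestP a b c (k * \<theta> + d) (k * t + d) \<le> 1"
    if "\<theta> \<in> {\<alpha>..\<beta>}" "t \<in> {\<alpha>..\<beta>}" for \<theta> t
  proof -
    have x: "0 \<le> k * \<theta> + d" "k * \<theta> + d \<le> 1/\<alpha>" using rng[OF that(1)] active c1 by linarith+
    have y: "0 \<le> k * t + d" "k * t + d \<le> 1/\<alpha>" using rng[OF that(2)] active c1 by linarith+
    have "contestP a b c (k * t + d) (k * \<theta> + d) \<ge> 0"
      using Pnn[OF that(2) y] rng[OF that(1)] P_nonneg[OF b_pos range(1) c2 c3 x] c4 y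
      by (meson P_nonneg[OF b_pos range(1) c2 c3] atLeastAtMost_iff c4 that(1))
    then show ?thesis using Pnn[OF that(2) x] P_antisym[of a b c "k * \<theta> + d" "k * t + d"] by linarith
  qed
  show ?thesis
    unfolding sym_BNE_trunc_def
  proof (intro conjI ballI allI impI)
    fix \<theta> assume th: "\<theta> \<in> measure_support M"
    then show "0 \<le> k * \<theta> + d" using supp rng active by fastforce
  next
    fix \<theta> x :: real assume th0: "\<theta> \<in> measure_support M" and x0: "0 \<le> x"
    have th: "\<theta> \<in> {\<alpha>..\<beta>}" using th0 supp by simp
    have Weq: "Wb (k * \<theta> + d) = W (k * \<theta> + d)"
      unfolding Wb_def W_def
    proof (rule integral_cong_AE)
      show "AE t in M. contestPbar a b c (k * \<theta> + d) (k * t + d) = contestP a b c (k * \<theta> + d) (k * t + d)"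
        using ae by eventually_elim (use Pin[OF th] in \<open>auto simp: contestPbar_def\<close>)
    qed (use intPb intP in auto)
    have W0: "W 0 \<ge> 0"
      unfolding W_def
      by (rule integral_nonneg_AE) (use ae in \<open>eventually_elim, use Pnn range in auto\<close>)
    have nn: "0 \<le> W (k * \<theta> + d) - \<theta> * (k * \<theta> + d)" using opt[OF th, of 0] W0 by simp
    show "trunc_payoff a b c M (\<lambda>\<theta>. k * \<theta> + d) \<theta> x
          \<le> trunc_payoff a b c M (\<lambda>\<theta>. k * \<theta> + d) \<theta> ((\<lambda>\<theta>. k * \<theta> + d) \<theta>)"
      unfolding T Weq
    proof (cases "\<theta> * x \<ge> 1")
      case True
      have "Wb x \<le> (\<integral>t. 1 \<partial>M)"
        unfolding Wb_def by (rule integral_mono) (use intPb in \<open>auto simp: contestPbar_def\<close>)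
      then have "Wb x \<le> 1" by (simp add: prob_space)
      then show "Wb x - \<theta> * x \<le> W (k * \<theta> + d) - \<theta> * (k * \<theta> + d)" using True nn by linarith
    next
      case False
      have "\<alpha> * x \<le> \<theta> * x" using th x0 by (simp add: mult_right_mono)
      then have "\<alpha> * x \<le> 1" using False by linarith
      then have x1: "x \<le> 1/\<alpha>" using range by (simp add: field_simps)
      have "Wb x \<le> W x"
        unfolding Wb_def W_def
      proof (rule integral_mono_AE)
        show "AE t in M. contestPbar a b c x (k * t + d) \<le> contestP a b c x (k * t + d)"
          using ae by eventually_elim (use Pnn x0 x1 in \<open>auto simp: contestPbar_def\<close>)
      qed (use intPb intP in auto)
      then show "Wb x - \<theta> * x \<le> W (k * \<theta> + d) - \<theta> * (k * \<theta> + d)" using opt[OF th, of x] by linarith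
    qed
  qed
qed

end
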